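(* Let $\pi$ have density $\pi(x)=\tilde{\pi}(x)/Z$ with respect to $\mu$ on $\mathcal{X}$, with $Z=\int\tilde{\pi}\,d\mu$. Let $\bar{q}$ be a probability density on $\mathcal{X}\times\{1,\dots,K\}$ (with respect to $\mu\otimes$ counting measure), written $\bar{q}(x,l)=q_l(x)\alpha(l)$ with $\alpha$ its marginal on labels and $q_l$ the conditional density of $x$ given $l$, and assume that for every $i$, $\alpha(i)>0$ and $\bar{q}(x,i)>0$ whenever $\tilde{\pi}(x)>0$. Let $(X_n,L_n)$, $n=1,\dots,N$, be i.i.d. from $\bar{q}$. For $i\in\{1,\dots,K\}$ let $N_i=\sum_{n=1}^N\mathbb{1}(L_n=i)$, $T_{ij}=\inf\{n\geq1:\sum_{m=1}^{n}\mathbb{1}(L_m=i)=j\}$, $X_{ij}=X_{T_{ij}}$ for $j=1,\dots,N_i$, and $$\widehat{Z}_i=\frac{1}{N}\sum_{j=1}^{N_i}\frac{\tilde{\pi}(X_{ij})}{\bar{q}(X_{ij},i)}.$$ Then for each $i\in\{1,\dots,K\}$, $$E(\widehat{Z}_i)=Z,\qquad \operatorname{var}(\widehat{Z}_i/Z)=\frac{1}{N}\left(E_{X\sim\pi}\left(\frac{\pi(X)}{\bar{q}(X,i)}\right)-1\right),$$ and for any $i\neq j$ in $\{1,\dots,K\}$, $$\operatorname{cov}(\widehat{Z}_i/Z,\widehat{Z}_j/Z)=-\frac{1}{N}.$$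
   Context: $N_{1:K}\sim\mathrm{Mult}(N,\alpha_{1:K})$; $X_{ij}$ is the $j$-th sampled point carrying label $i$. *)

theory Defs
  imports "HOL-Probability.Probability"
begin

text \<open>Sample: \<omega> :: nat \<Rightarrow> 'a \<times> nat, with \<omega> n = (X_n, L_n) for n = 1..N.\<close>

definition Ncount :: "nat \<Rightarrow> (nat \<Rightarrow> 'a \<times> nat) \<Rightarrow> nat \<Rightarrow> nat" where
  "Ncount N \<omega> i = card {n \<in> {1..N}. snd (\<omega> n) = i}"

definition Tidx :: "(nat \<Rightarrow> 'a \<times> nat) \<Rightarrow> nat \<Rightarrow> nat \<Rightarrow> nat" where
  "Tidx \<omega> i j = Inf {n. n \<ge> 1 \<and> card {m \<in> {1..n}. snd (\<omega> m) = i} = j}"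

definition Xlab :: "(nat \<Rightarrow> 'a \<times> nat) \<Rightarrow> nat \<Rightarrow> nat \<Rightarrow> 'a" where
  "Xlab \<omega> i j = fst (\<omega> (Tidx \<omega> i j))"

definition Zhat :: "nat \<Rightarrow> ('a \<Rightarrow> real) \<Rightarrow> ('a \<times> nat \<Rightarrow> real)
    \<Rightarrow> (nat \<Rightarrow> 'a \<times> nat) \<Rightarrow> nat \<Rightarrow> real" where
  "Zhat N pit qbar \<omega> i =
     (1 / real N) * (\<Sum>j = 1..Ncount N \<omega> i. pit (Xlab \<omega> i j) / qbar (Xlab \<omega> i j, i))"

definition alpha :: "'a measure \<Rightarrow> ('a \<times> nat \<Rightarrow> real) \<Rightarrow> nat \<Rightarrow> real" where
  "alpha \<mu> qbar l = (\<integral>x. qbar (x, l) \<partial>\<mu>)"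

text \<open>Variance valued in [0,\<infinity>] (so it may be infinite), and covariance.\<close>
definition evar :: "'b measure \<Rightarrow> ('b \<Rightarrow> real) \<Rightarrow> ennreal" where
  "evar M X = (\<integral>\<^sup>+ \<omega>. ennreal ((X \<omega> - (\<integral>\<omega>'. X \<omega>' \<partial>M))\<^sup>2) \<partial>M)"

definition cov :: "'b measure \<Rightarrow> ('b \<Rightarrow> real) \<Rightarrow> ('b \<Rightarrow> real) \<Rightarrow> real" where
  "cov M X Y = (\<integral>\<omega>. (X \<omega> - (\<integral>\<omega>'. X \<omega>' \<partial>M)) * (Y \<omega> - (\<integral>\<omega>'. Y \<omega>' \<partial>M)) \<partial>M)"

end

theory Submission
  imports Defs
begin

lemma cnt_Suc:
  "card {m \<in> {1..Suc n}. P m} = card {m \<in> {1..n}. P m} + (if P (Suc n) then 1 else 0)"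
proof -
  have "{m \<in> {1..Suc n}. P m} = {m \<in> {1..n}. P m} \<union> (if P (Suc n) then {Suc n} else {})"
    by (auto simp: le_Suc_eq)
  then show ?thesis by (auto simp: card_insert_if)
qed

lemma cnt_exists:
  fixes N :: nat shows "j \<le> card {m \<in> {1..N}. P m} \<Longrightarrow> \<exists>n\<le>N. card {m \<in> {1..n}. P m} = j"
proof (induction N arbitrary: j)
  case 0 then show ?case by auto
next
  case (Suc N)
  show ?case
  proof (cases "j \<le> card {m \<in> {1..N}. P m}")
    case True then show ?thesis using Suc.IH by (meson le_Suc_eq)
  next
    case False
    then have "j = card {m \<in> {1..Suc N}. P m}" using Suc.prems cnt_Suc[where P=P and n=N]
      by (auto split: if_splits)
    then show ?thesis by blast
  qed
qed

lemma Tidx_props: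
  fixes \<omega> :: "nat \<Rightarrow> 'a \<times> nat"
  assumes j: "1 \<le> j" "j \<le> Ncount N \<omega> i"
  shows "Tidx \<omega> i j \<in> {n \<in> {1..N}. snd (\<omega> n) = i}"
    and "card {m \<in> {1..Tidx \<omega> i j}. snd (\<omega> m) = i} = j"
proof -
  define c where "c n = card {m \<in> {1..n}. snd (\<omega> m) = i}" for n
  have c0: "c 0 = 0" by (simp add: c_def)
  obtain n where n: "n \<le> N" "c n = j"
    using cnt_exists[of j N "\<lambda>m. snd (\<omega> m) = i"] j by (auto simp: c_def Ncount_def)
  have n1: "n \<ge> 1" using n c0 j by (cases n) auto
  define T where "T = Tidx \<omega> i j"
  have T: "T = (LEAST n. n \<ge> 1 \<and> c n = j)"
    by (simp add: T_def Tidx_def Inf_nat_def c_def)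
  have TP: "T \<ge> 1 \<and> c T = j" unfolding T by (rule LeastI[of _ n]) (use n n1 in auto)
  have TN: "T \<le> N" using Least_le[of "\<lambda>n. n \<ge> 1 \<and> c n = j" n] n n1 T by auto
  have prev: "c (T - 1) \<noteq> j"
  proof (cases "T - 1 \<ge> 1")
    case True
    have "\<not> (T - 1 \<ge> 1 \<and> c (T - 1) = j)"
      using not_less_Least[of "T - 1" "\<lambda>n. n \<ge> 1 \<and> c n = j"] TP T by fastforce
    then show ?thesis using True by blast
  next
    case False then have "T - 1 = 0" by auto
    then show ?thesis using c0 j by simp
  qed
  have "c T = c (T - 1) + (if snd (\<omega> T) = i then 1 else 0)"
    using cnt_Suc[where P="\<lambda>m. snd (\<omega> m) = i" and n="T - 1"] TP by (simp add: c_def)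
  then have "snd (\<omega> T) = i" using prev TP by (auto split: if_splits)
  then show "Tidx \<omega> i j \<in> {n \<in> {1..N}. snd (\<omega> n) = i}" using TP TN T_def by auto
  show "card {m \<in> {1..Tidx \<omega> i j}. snd (\<omega> m) = i} = j" using TP by (simp add: c_def T_def)
qed

lemma Zhat_eq:
  fixes \<omega> :: "nat \<Rightarrow> 'a \<times> nat"
  shows "Zhat N pit qbar \<omega> i = (1 / real N) *
    (\<Sum>n\<in>{1..N}. if snd (\<omega> n) = i then pit (fst (\<omega> n)) / qbar (fst (\<omega> n), i) else 0)"
proof -
  define S where "S = {n \<in> {1..N}. snd (\<omega> n) = i}"
  define F where "F n = pit (fst (\<omega> n)) / qbar (fst (\<omega> n), i)" for n
  have inj: "inj_on (Tidx \<omega> i) {1..Ncount N \<omega> i}"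
    by (rule inj_on_inverseI[of _ "\<lambda>n. card {m \<in> {1..n}. snd (\<omega> m) = i}"])
       (use Tidx_props(2) in force)
  have sub: "Tidx \<omega> i ` {1..Ncount N \<omega> i} \<subseteq> S"
    using Tidx_props(1)[of _ N \<omega> i] unfolding S_def by (meson image_subsetI atLeastAtMost_iff)
  have "card (Tidx \<omega> i ` {1..Ncount N \<omega> i}) = card S"
    using card_image[OF inj] by (simp add: Ncount_def S_def)
  then have img: "Tidx \<omega> i ` {1..Ncount N \<omega> i} = S"
    using sub by (intro card_subset_eq) (auto simp: S_def)
  have "(\<Sum>j = 1..Ncount N \<omega> i. pit (Xlab \<omega> i j) / qbar (Xlab \<omega> i j, i)) = sum F S"
    unfolding img[symmetric] sum.reindex[OF inj] by (simp add: F_def Xlab_def)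
  also have "\<dots> = (\<Sum>n\<in>{1..N}. if snd (\<omega> n) = i then F n else 0)"
    unfolding S_def by (rule sum.inter_filter) simp
  finally show ?thesis unfolding Zhat_def F_def by simp
qed


lemma prod_if1:
  fixes A :: "'i \<Rightarrow> 'b::comm_monoid_mult"
  assumes "finite I" "n \<in> I"
  shows "(\<Prod>k\<in>I. if k = n then A k else 1) = A n"
  using assms by (simp add: prod.delta)

lemma prod_if2:
  fixes A B :: "'i \<Rightarrow> 'b::comm_monoid_mult"
  assumes "finite I" "n \<in> I" "m \<in> I" "n \<noteq> m"
  shows "(\<Prod>k\<in>I. if k = n then A k else if k = m then B k else 1) = A n * B m"
proof -
  have "(\<Prod>k\<in>I. if k = n then A k else if k = m then B k else 1)
      = (\<Prod>k\<in>I. (if k = n then A k else 1) * (if k = m then B k else 1))"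
    using assms by (intro prod.cong) auto
  also have "\<dots> = A n * B m" using assms by (simp add: prod.distrib prod.delta)
  finally show ?thesis .
qed

lemma E1:
  fixes f :: "'a \<Rightarrow> real" and I :: "'i set"
  assumes Q: "prob_space Q" and I: "finite I" "n \<in> I" and f: "integrable Q f"
  shows "integrable (PiM I (\<lambda>_. Q)) (\<lambda>\<omega>. f (\<omega> n))"
    and "(\<integral>\<omega>. f (\<omega> n) \<partial>PiM I (\<lambda>_. Q)) = (\<integral>z. f z \<partial>Q)"
proof -
  interpret Q: prob_space Q by fact
  interpret product_sigma_finite "\<lambda>_. Q" by standard
  define F where "F k = (if k = n then f else (\<lambda>_. 1))" for k
  have eq: "(\<Prod>k\<in>I. F k (x k)) = f (x n)" for x :: "'i \<Rightarrow> 'a"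
  proof -
    have "(\<Prod>k\<in>I. F k (x k)) = (\<Prod>k\<in>I. if k = n then f (x k) else 1)"
      by (rule prod.cong) (simp_all add: F_def)
    then show ?thesis using prod_if1[OF I, of "\<lambda>k. f (x k)"] by simp
  qed
  have int: "\<And>k. k \<in> I \<Longrightarrow> integrable Q (F k)" using f by (auto simp: F_def)
  show "integrable (PiM I (\<lambda>_. Q)) (\<lambda>\<omega>. f (\<omega> n))"
    using product_integrable_prod[where f=F and I=I, OF I(1) int] by (simp add: eq)
  have "(\<integral>\<omega>. f (\<omega> n) \<partial>PiM I (\<lambda>_. Q)) = (\<Prod>k\<in>I. integral\<^sup>L Q (F k))"
    using product_integral_prod[where f=F and I=I, OF I(1) int] by (simp add: eq)
  also have "\<dots> = (\<integral>z. f z \<partial>Q)"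
  proof -
    have "(\<Prod>k\<in>I. integral\<^sup>L Q (F k)) = (\<Prod>k\<in>I. if k = n then integral\<^sup>L Q f else 1)"
      by (rule prod.cong) (simp_all add: F_def Q.prob_space)
    then show ?thesis using prod_if1[OF I, of "\<lambda>k. integral\<^sup>L Q f"] by simp
  qed
  finally show "(\<integral>\<omega>. f (\<omega> n) \<partial>PiM I (\<lambda>_. Q)) = (\<integral>z. f z \<partial>Q)" .
qed

lemma E2:
  fixes f g :: "'a \<Rightarrow> real" and I :: "'i set"
  assumes Q: "prob_space Q" and I: "finite I" "n \<in> I" "m \<in> I" "n \<noteq> m"
    and f: "integrable Q f" and g: "integrable Q g"
  shows "integrable (PiM I (\<lambda>_. Q)) (\<lambda>\<omega>. f (\<omega> n) * g (\<omega> m))"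
    and "(\<integral>\<omega>. f (\<omega> n) * g (\<omega> m) \<partial>PiM I (\<lambda>_. Q)) = (\<integral>z. f z \<partial>Q) * (\<integral>z. g z \<partial>Q)"
proof -
  interpret Q: prob_space Q by fact
  interpret product_sigma_finite "\<lambda>_. Q" by standard
  define F where "F k = (if k = n then f else if k = m then g else (\<lambda>_. 1))" for k
  have eq: "(\<Prod>k\<in>I. F k (x k)) = f (x n) * g (x m)" for x :: "'i \<Rightarrow> 'a"
  proof -
    have "(\<Prod>k\<in>I. F k (x k)) = (\<Prod>k\<in>I. if k = n then f (x k) else if k = m then g (x k) else 1)"
      by (rule prod.cong) (simp_all add: F_def)
    then show ?thesis using prod_if2[OF I, of "\<lambda>k. f (x k)" "\<lambda>k. g (x k)"] by simp
  qed
  have int: "\<And>k. k \<in> I \<Longrightarrow> integrable Q (F k)" using f g by (auto simp: F_def)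
  show "integrable (PiM I (\<lambda>_. Q)) (\<lambda>\<omega>. f (\<omega> n) * g (\<omega> m))"
    using product_integrable_prod[where f=F and I=I, OF I(1) int] by (simp add: eq)
  have "(\<integral>\<omega>. f (\<omega> n) * g (\<omega> m) \<partial>PiM I (\<lambda>_. Q)) = (\<Prod>k\<in>I. integral\<^sup>L Q (F k))"
    using product_integral_prod[where f=F and I=I, OF I(1) int] by (simp add: eq)
  also have "\<dots> = (\<integral>z. f z \<partial>Q) * (\<integral>z. g z \<partial>Q)"
  proof -
    have "(\<Prod>k\<in>I. integral\<^sup>L Q (F k)) = (\<Prod>k\<in>I. if k = n then integral\<^sup>L Q f else if k = m then integral\<^sup>L Q g else 1)"
      by (rule prod.cong) (simp_all add: F_def Q.prob_space)
    then show ?thesis using prod_if2[OF I, of "\<lambda>k. integral\<^sup>L Q f" "\<lambda>k. integral\<^sup>L Q g"] by simp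
  qed
  finally show "(\<integral>\<omega>. f (\<omega> n) * g (\<omega> m) \<partial>PiM I (\<lambda>_. Q)) = (\<integral>z. f z \<partial>Q) * (\<integral>z. g z \<partial>Q)" .
qed

lemma E3:
  fixes f :: "'a \<Rightarrow> ennreal" and I :: "'i set"
  assumes Q: "prob_space Q" and I: "finite I" "n \<in> I" and f: "f \<in> borel_measurable Q"
  shows "(\<integral>\<^sup>+\<omega>. f (\<omega> n) \<partial>PiM I (\<lambda>_. Q)) = (\<integral>\<^sup>+z. f z \<partial>Q)"
proof -
  interpret Q: prob_space Q by fact
  interpret product_sigma_finite "\<lambda>_. Q" by standard
  define F where "F k = (if k = n then f else (\<lambda>_. 1))" for k
  have eq: "(\<Prod>k\<in>I. F k (x k)) = f (x n)" for x :: "'i \<Rightarrow> 'a"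
  proof -
    have "(\<Prod>k\<in>I. F k (x k)) = (\<Prod>k\<in>I. if k = n then f (x k) else 1)"
      by (rule prod.cong) (simp_all add: F_def)
    then show ?thesis using prod_if1[OF I, of "\<lambda>k. f (x k)"] by simp
  qed
  have ms: "\<And>k. k \<in> I \<Longrightarrow> F k \<in> borel_measurable Q" using f by (auto simp: F_def)
  have "(\<integral>\<^sup>+\<omega>. f (\<omega> n) \<partial>PiM I (\<lambda>_. Q)) = (\<Prod>k\<in>I. integral\<^sup>N Q (F k))"
    using product_nn_integral_prod[where f=F and I=I, OF I(1) ms] by (simp add: eq)
  also have "\<dots> = (\<integral>\<^sup>+z. f z \<partial>Q)"
  proof -
    have "(\<Prod>k\<in>I. integral\<^sup>N Q (F k)) = (\<Prod>k\<in>I. if k = n then integral\<^sup>N Q f else 1)"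
      by (rule prod.cong) (simp_all add: F_def Q.emeasure_space_1)
    then show ?thesis using prod_if1[OF I, of "\<lambda>k. integral\<^sup>N Q f"] by simp
  qed
  finally show ?thesis .
qed


lemma pair_term:
  fixes h1 h2 :: "'a \<Rightarrow> real" and I :: "'i set"
  assumes Q: "prob_space Q" and I: "finite I" "n \<in> I" "m \<in> I"
    and i1: "integrable Q h1" and i2: "integrable Q h2" and i12: "integrable Q (\<lambda>z. h1 z * h2 z)"
    and m1: "(\<integral>z. h1 z \<partial>Q) = 0"
  shows "integrable (PiM I (\<lambda>_. Q)) (\<lambda>\<omega>. h1 (\<omega> n) * h2 (\<omega> m))"
    and "(\<integral>\<omega>. h1 (\<omega> n) * h2 (\<omega> m) \<partial>PiM I (\<lambda>_. Q)) = (if n = m then (\<integral>z. h1 z * h2 z \<partial>Q) else 0)"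
proof -
  show "integrable (PiM I (\<lambda>_. Q)) (\<lambda>\<omega>. h1 (\<omega> n) * h2 (\<omega> m))"
  proof (cases "n = m")
    case True then show ?thesis using E1(1)[OF Q I(1,2) i12] by simp
  next
    case False then show ?thesis using E2(1)[OF Q I False i1 i2] by simp
  qed
  show "(\<integral>\<omega>. h1 (\<omega> n) * h2 (\<omega> m) \<partial>PiM I (\<lambda>_. Q)) = (if n = m then (\<integral>z. h1 z * h2 z \<partial>Q) else 0)"
  proof (cases "n = m")
    case True then show ?thesis using E1(2)[OF Q I(1,2) i12] by simp
  next
    case False then show ?thesis using E2(2)[OF Q I False i1 i2] m1 by simp
  qed
qed

lemma L:
  fixes h1 h2 :: "'a \<Rightarrow> real"
  assumes Q: "prob_space Q" and N: "N \<ge> 1"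
    and i1: "integrable Q h1" and i2: "integrable Q h2" and i12: "integrable Q (\<lambda>z. h1 z * h2 z)"
    and m1: "(\<integral>z. h1 z \<partial>Q) = 0"
  shows "integrable (PiM {1..N} (\<lambda>_. Q))
           (\<lambda>\<omega>. ((1 / real N) * (\<Sum>n\<in>{1..N}. h1 (\<omega> n))) * ((1 / real N) * (\<Sum>m\<in>{1..N}. h2 (\<omega> m))))"
    and "(\<integral>\<omega>. ((1 / real N) * (\<Sum>n\<in>{1..N}. h1 (\<omega> n))) * ((1 / real N) * (\<Sum>m\<in>{1..N}. h2 (\<omega> m)))
           \<partial>PiM {1..N} (\<lambda>_. Q)) = (1 / real N) * (\<integral>z. h1 z * h2 z \<partial>Q)"
proof -
  let ?P = "PiM {1..N} (\<lambda>_. Q)"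
  have eq: "((1 / real N) * (\<Sum>n\<in>{1..N}. h1 (\<omega> n))) * ((1 / real N) * (\<Sum>m\<in>{1..N}. h2 (\<omega> m)))
      = (1 / real N)^2 * (\<Sum>n\<in>{1..N}. \<Sum>m\<in>{1..N}. h1 (\<omega> n) * h2 (\<omega> m))" for \<omega> :: "nat \<Rightarrow> 'a"
    by (simp add: sum_product power2_eq_square)
  have ti: "integrable ?P (\<lambda>\<omega>. h1 (\<omega> n) * h2 (\<omega> m))" if "n \<in> {1..N}" "m \<in> {1..N}" for n m
    using pair_term(1)[OF Q _ that i1 i2 i12 m1] by simp
  have tv: "(\<integral>\<omega>. h1 (\<omega> n) * h2 (\<omega> m) \<partial>?P) = (if n = m then (\<integral>z. h1 z * h2 z \<partial>Q) else 0)"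
    if "n \<in> {1..N}" "m \<in> {1..N}" for n m
    using pair_term(2)[OF Q _ that i1 i2 i12 m1] by simp
  have int: "integrable ?P (\<lambda>\<omega>. \<Sum>n\<in>{1..N}. \<Sum>m\<in>{1..N}. h1 (\<omega> n) * h2 (\<omega> m))"
  proof (rule Bochner_Integration.integrable_sum)
    fix n assume n: "n \<in> {1..N}"
    show "integrable ?P (\<lambda>\<omega>. \<Sum>m\<in>{1..N}. h1 (\<omega> n) * h2 (\<omega> m))"
    proof (rule Bochner_Integration.integrable_sum)
      fix m assume m: "m \<in> {1..N}"
      show "integrable ?P (\<lambda>\<omega>. h1 (\<omega> n) * h2 (\<omega> m))" by (rule ti[OF n m])
    qed
  qed
  then show "integrable ?P
           (\<lambda>\<omega>. ((1 / real N) * (\<Sum>n\<in>{1..N}. h1 (\<omega> n))) * ((1 / real N) * (\<Sum>m\<in>{1..N}. h2 (\<omega> m))))"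
    unfolding eq by (intro integrable_mult_right)
  have "(\<integral>\<omega>. (\<Sum>n\<in>{1..N}. \<Sum>m\<in>{1..N}. h1 (\<omega> n) * h2 (\<omega> m)) \<partial>?P)
      = (\<Sum>n\<in>{1..N}. \<Sum>m\<in>{1..N}. (\<integral>\<omega>. h1 (\<omega> n) * h2 (\<omega> m) \<partial>?P))"
    using ti by (subst Bochner_Integration.integral_sum) (auto intro!: sum.cong Bochner_Integration.integral_sum Bochner_Integration.integrable_sum)
  also have "\<dots> = (\<Sum>n\<in>{1..N}. \<Sum>m\<in>{1..N}. (if n = m then (\<integral>z. h1 z * h2 z \<partial>Q) else 0))"
    using tv by (intro sum.cong refl) auto
  also have "\<dots> = real N * (\<integral>z. h1 z * h2 z \<partial>Q)"
    by (simp add: sum.delta)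
  finally have s: "(\<integral>\<omega>. (\<Sum>n\<in>{1..N}. \<Sum>m\<in>{1..N}. h1 (\<omega> n) * h2 (\<omega> m)) \<partial>?P) = real N * (\<integral>z. h1 z * h2 z \<partial>Q)" .
  show "(\<integral>\<omega>. ((1 / real N) * (\<Sum>n\<in>{1..N}. h1 (\<omega> n))) * ((1 / real N) * (\<Sum>m\<in>{1..N}. h2 (\<omega> m)))
           \<partial>?P) = (1 / real N) * (\<integral>z. h1 z * h2 z \<partial>Q)"
    unfolding eq using s N by (simp add: power2_eq_square)
qed


lemma transfer_Q:
  fixes qbar :: "'a \<times> nat \<Rightarrow> real" and f :: "'a \<Rightarrow> real"
  assumes qm: "qbar \<in> borel_measurable (\<mu> \<Otimes>\<^sub>M count_space {1..K})"
    and qnn: "\<And>x l. x \<in> space \<mu> \<Longrightarrow> l \<in> {1..K} \<Longrightarrow> qbar (x, l) \<ge> 0"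
    and i: "i \<in> {1..K}" and fm: "f \<in> borel_measurable \<mu>"
  shows "(\<integral>\<^sup>+z. ennreal (if snd z = i then f (fst z) else 0)
            \<partial>density (\<mu> \<Otimes>\<^sub>M count_space {1..K}) (\<lambda>z. ennreal (qbar z)))
         = (\<integral>\<^sup>+x. ennreal (qbar (x, i) * f x) \<partial>\<mu>)"
proof -
  interpret C: sigma_finite_measure "count_space {1..K}"
    by (rule sigma_finite_measure_count_space_finite) simp
  let ?M = "\<mu> \<Otimes>\<^sub>M count_space {1..K}"
  note [measurable] = qm fm
  let ?F = "\<lambda>z. ennreal (qbar z) * ennreal (if snd z = i then f (fst z) else 0)"
  have Fm: "?F \<in> borel_measurable ?M" by measurable
  have "(\<integral>\<^sup>+z. ennreal (if snd z = i then f (fst z) else 0) \<partial>density ?M (\<lambda>z. ennreal (qbar z)))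
      = (\<integral>\<^sup>+z. ?F z \<partial>?M)"
    by (intro nn_integral_density) measurable
  also have "\<dots> = (\<integral>\<^sup>+x. \<integral>\<^sup>+l. ?F (x, l) \<partial>count_space {1..K} \<partial>\<mu>)"
    using C.nn_integral_fst[OF Fm] by simp
  also have "\<dots> = (\<integral>\<^sup>+x. (\<Sum>l\<in>{1..K}. ?F (x, l)) \<partial>\<mu>)"
    by (simp add: nn_integral_count_space_finite)
  also have "\<dots> = (\<integral>\<^sup>+x. ennreal (qbar (x, i) * f x) \<partial>\<mu>)"
  proof (rule nn_integral_cong)
    fix x assume x: "x \<in> space \<mu>"
    have "(\<Sum>l\<in>{1..K}. ?F (x, l)) = (\<Sum>l\<in>{1..K}. if l = i then ennreal (qbar (x, i)) * ennreal (f x) else 0)"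
      by (intro sum.cong) auto
    also have "\<dots> = ennreal (qbar (x, i)) * ennreal (f x)" using i by (simp add: sum.delta)
    also have "\<dots> = ennreal (qbar (x, i) * f x)" using qnn[OF x i] by (simp add: ennreal_mult')
    finally show "(\<Sum>l\<in>{1..K}. ?F (x, l)) = ennreal (qbar (x, i) * f x)" .
  qed
  finally show ?thesis .
qed


theorem lemma1:
  fixes \<mu> :: "'a measure" and pit :: "'a \<Rightarrow> real" and qbar :: "'a \<times> nat \<Rightarrow> real"
    and K N :: nat and Z :: real
  defines "Q \<equiv> density (\<mu> \<Otimes>\<^sub>M count_space {1..K}) (\<lambda>z. ennreal (qbar z))"
    and "P \<equiv> PiM {1..N} (\<lambda>_. density (\<mu> \<Otimes>\<^sub>M count_space {1..K}) (\<lambda>z. ennreal (qbar z)))"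
  assumes pit_meas: "pit \<in> borel_measurable \<mu>"
    and pit_nonneg: "\<And>x. x \<in> space \<mu> \<Longrightarrow> pit x \<ge> 0"
    and pit_int: "integrable \<mu> pit"
    and Z_def: "Z = (\<integral>x. pit x \<partial>\<mu>)"
    and Z_pos: "Z > 0"
    and q_meas: "qbar \<in> borel_measurable (\<mu> \<Otimes>\<^sub>M count_space {1..K})"
    and q_nonneg: "\<And>x l. x \<in> space \<mu> \<Longrightarrow> l \<in> {1..K} \<Longrightarrow> qbar (x, l) \<ge> 0"
    and Q_prob: "prob_space Q"
    and alpha_pos: "\<And>i. i \<in> {1..K} \<Longrightarrow> alpha \<mu> qbar i > 0"
    and q_pos: "\<And>i x. i \<in> {1..K} \<Longrightarrow> x \<in> space \<mu> \<Longrightarrow> pit x > 0 \<Longrightarrow> qbar (x, i) > 0"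
    and N_pos: "N \<ge> 1"
  shows "(\<forall>i \<in> {1..K}.
           (\<integral>\<omega>. Zhat N pit qbar \<omega> i \<partial>P) = Z
         \<and> evar P (\<lambda>\<omega>. Zhat N pit qbar \<omega> i / Z)
             = ennreal (1 / real N) *
               ((\<integral>\<^sup>+ x. ennreal ((pit x / Z) * ((pit x / Z) / qbar (x, i))) \<partial>\<mu>) - 1))
       \<and> (\<forall>i \<in> {1..K}. \<forall>j \<in> {1..K}. i \<noteq> j \<longrightarrow>
           cov P (\<lambda>\<omega>. Zhat N pit qbar \<omega> i / Z) (\<lambda>\<omega>. Zhat N pit qbar \<omega> j / Z) = - 1 / real N)"
proof -
  interpret Qp: prob_space Q by (rule Q_prob)
  have PQ: "P = PiM {1..N} (\<lambda>_. Q)" unfolding P_def Q_def ..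
  interpret Pp: prob_space P unfolding PQ by (rule prob_space_PiM) (rule Q_prob)
  have spQ: "space Q = space \<mu> \<times> {1..K}" by (simp add: Q_def space_pair_measure)
  have sQ: "sets Q = sets (\<mu> \<Otimes>\<^sub>M count_space {1..K})" unfolding Q_def by (rule sets_density)
  define g where "g i x = pit x / qbar (x, i) / Z" for i x
  define G where "G i z = (if snd z = i then g i (fst z) else 0)" for i z
  define h where "h i z = G i z - 1" for i z
  define Ist where "Ist i = (\<integral>\<^sup>+ x. ennreal ((pit x / Z) * ((pit x / Z) / qbar (x, i))) \<partial>\<mu>)" for i
  have gm: "g i \<in> borel_measurable \<mu>" if i: "i \<in> {1..K}" for i
  proof -
    have "(\<lambda>x. (x, i)) \<in> measurable \<mu> (\<mu> \<Otimes>\<^sub>M count_space {1..K})"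
      using i by (intro measurable_Pair) auto
    then have "(\<lambda>x. qbar (x, i)) \<in> borel_measurable \<mu>"
      using q_meas by (rule measurable_compose)
    then show ?thesis unfolding g_def using pit_meas by (intro borel_measurable_divide) auto
  qed
  have Gm: "G i \<in> borel_measurable Q" if i: "i \<in> {1..K}" for i
  proof -
    have pr: "{z \<in> space (\<mu> \<Otimes>\<^sub>M count_space {1..K}). snd z = i} \<in> sets (\<mu> \<Otimes>\<^sub>M count_space {1..K})" by measurable
    have gf: "(\<lambda>z. g i (fst z)) \<in> borel_measurable (\<mu> \<Otimes>\<^sub>M count_space {1..K})"
      by (rule measurable_compose[OF measurable_fst gm[OF i]])
    have "G i \<in> borel_measurable (\<mu> \<Otimes>\<^sub>M count_space {1..K})" unfolding G_def
      by (rule measurable_If[OF gf borel_measurable_const pr])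
    then show ?thesis unfolding measurable_cong_sets[OF sQ refl] .
  qed
  have Gnn: "G i z \<ge> 0" if "z \<in> space Q" "i \<in> {1..K}" for i z
    using that pit_nonneg q_nonneg Z_pos by (auto simp: spQ G_def g_def)
  have G01: "G i z * G j z = 0" if "i \<noteq> j" for i j z using that by (simp add: G_def)
  have Zint: "(\<integral>\<^sup>+x. ennreal (pit x / Z) \<partial>\<mu>) = 1"
  proof -
    have "integrable \<mu> (\<lambda>x. pit x / Z)" using pit_int by simp
    then have "(\<integral>\<^sup>+x. ennreal (pit x / Z) \<partial>\<mu>) = ennreal (\<integral>x. pit x / Z \<partial>\<mu>)"
      using pit_nonneg Z_pos by (intro nn_integral_eq_integral) auto
    also have "(\<integral>x. pit x / Z \<partial>\<mu>) = 1" using Z_pos by (simp add: Z_def[symmetric])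
    finally show ?thesis by simp
  qed
  have G1: "(\<integral>\<^sup>+z. ennreal (G i z) \<partial>Q) = 1" if i: "i \<in> {1..K}" for i
  proof -
    have "(\<integral>\<^sup>+z. ennreal (G i z) \<partial>Q) = (\<integral>\<^sup>+x. ennreal (qbar (x, i) * g i x) \<partial>\<mu>)"
      unfolding Q_def G_def by (rule transfer_Q[OF q_meas q_nonneg i gm[OF i]])
    also have "\<dots> = (\<integral>\<^sup>+x. ennreal (pit x / Z) \<partial>\<mu>)"
    proof (rule nn_integral_cong)
      fix x assume x: "x \<in> space \<mu>"
      show "ennreal (qbar (x, i) * g i x) = ennreal (pit x / Z)"
      proof (cases "pit x > 0")
        case True then have "qbar (x, i) > 0" using q_pos[OF i x] by simp
        then show ?thesis by (simp add: g_def)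
      next
        case False then have "pit x = 0" using pit_nonneg[OF x] by simp
        then show ?thesis by (simp add: g_def)
      qed
    qed
    finally show ?thesis using Zint by simp
  qed
  have Gbi: "has_bochner_integral Q (G i) 1" if i: "i \<in> {1..K}" for i
    using Gm[OF i] Gnn[OF _ i] G1[OF i] by (intro has_bochner_integral_nn_integral) auto
  have Gint: "integrable Q (G i)" and GE: "(\<integral>z. G i z \<partial>Q) = 1" if i: "i \<in> {1..K}" for i
    using Gbi[OF i] by (auto simp: has_bochner_integral_iff)
  have G2: "(\<integral>\<^sup>+z. ennreal ((G i z)\<^sup>2) \<partial>Q) = Ist i" if i: "i \<in> {1..K}" for i
  proof -
    have "(\<integral>\<^sup>+z. ennreal ((G i z)\<^sup>2) \<partial>Q) = (\<integral>\<^sup>+z. ennreal (if snd z = i then (g i (fst z))\<^sup>2 else 0) \<partial>Q)"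
      by (intro nn_integral_cong) (simp add: G_def)
    also have "\<dots> = (\<integral>\<^sup>+x. ennreal (qbar (x, i) * (g i x)\<^sup>2) \<partial>\<mu>)"
      unfolding Q_def by (rule transfer_Q[OF q_meas q_nonneg i]) (use gm[OF i] in measurable)
    also have "\<dots> = Ist i" unfolding Ist_def
    proof (rule nn_integral_cong)
      fix x assume x: "x \<in> space \<mu>"
      show "ennreal (qbar (x, i) * (g i x)\<^sup>2) = ennreal ((pit x / Z) * ((pit x / Z) / qbar (x, i)))"
      proof (cases "qbar (x, i) = 0")
        case True then show ?thesis by (simp add: g_def)
      next
        case False then show ?thesis by (simp add: g_def power2_eq_square field_simps)
      qed
    qed
    finally show ?thesis .
  qed
  have Yeq: "Zhat N pit qbar \<omega> i / Z = (1 / real N) * (\<Sum>n\<in>{1..N}. G i (\<omega> n))" for \<omega> i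
  proof -
    have "(\<Sum>n\<in>{1..N}. G i (\<omega> n)) = (\<Sum>n\<in>{1..N}. (if snd (\<omega> n) = i then pit (fst (\<omega> n)) / qbar (fst (\<omega> n), i) else 0) / Z)"
      by (intro sum.cong refl) (simp add: G_def g_def)
    also have "\<dots> = (\<Sum>n\<in>{1..N}. (if snd (\<omega> n) = i then pit (fst (\<omega> n)) / qbar (fst (\<omega> n), i) else 0)) / Z"
      by (rule sum_divide_distrib[symmetric])
    finally show ?thesis unfolding Zhat_eq by simp
  qed

  let ?Y = "\<lambda>i \<omega>. (1 / real N) * (\<Sum>n\<in>{1..N}. G i (\<omega> n))"
  have Nr: "real N > 0" using N_pos by simp
  have EYi: "integrable P (?Y i)" if i: "i \<in> {1..K}" for i
    unfolding PQ
    by (intro integrable_mult_right Bochner_Integration.integrable_sum E1(1)[OF Q_prob _ _ Gint[OF i]]) auto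
  have EYv: "(\<integral>\<omega>. ?Y i \<omega> \<partial>P) = 1" if i: "i \<in> {1..K}" for i
  proof -
    have "(\<integral>\<omega>. (\<Sum>n\<in>{1..N}. G i (\<omega> n)) \<partial>P) = (\<Sum>n\<in>{1..N}. (\<integral>\<omega>. G i (\<omega> n) \<partial>P))"
      unfolding PQ by (rule Bochner_Integration.integral_sum) (intro E1(1)[OF Q_prob _ _ Gint[OF i]]; auto)
    also have "\<dots> = (\<Sum>n\<in>{1..N}. (1::real))"
      unfolding PQ by (intro sum.cong refl) (simp add: E1(2)[OF Q_prob _ _ Gint[OF i]] GE[OF i])
    finally show ?thesis using Nr by simp
  qed
  have hint: "integrable Q (h i)" and hE: "(\<integral>z. h i z \<partial>Q) = 0" if i: "i \<in> {1..K}" for i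
  proof -
    have he: "h i = (\<lambda>z. G i z - 1)" by (simp add: h_def fun_eq_iff)
    show "integrable Q (h i)" unfolding he using Gint[OF i] by simp
    show "(\<integral>z. h i z \<partial>Q) = 0" unfolding he using Gint[OF i] GE[OF i] by (simp add: Qp.prob_space)
  qed
  have Ym1: "?Y i \<omega> - 1 = (1 / real N) * (\<Sum>n\<in>{1..N}. h i (\<omega> n))" for i \<omega>
    using Nr by (simp add: h_def sum_subtractf field_simps)
  have EZ: "(\<integral>\<omega>. Zhat N pit qbar \<omega> i / Z \<partial>P) = 1" if i: "i \<in> {1..K}" for i
    unfolding Yeq using EYv[OF i] .
  have part1: "(\<integral>\<omega>. Zhat N pit qbar \<omega> i \<partial>P) = Z" if i: "i \<in> {1..K}" for i
  proof -
    have "(\<integral>\<omega>. Zhat N pit qbar \<omega> i \<partial>P) = (\<integral>\<omega>. Z * (Zhat N pit qbar \<omega> i / Z) \<partial>P)"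
      using Z_pos by simp
    also have "\<dots> = Z * 1" using EZ[OF i] by simp
    finally show ?thesis by simp
  qed
  have partc: "cov P (\<lambda>\<omega>. Zhat N pit qbar \<omega> i / Z) (\<lambda>\<omega>. Zhat N pit qbar \<omega> j / Z) = - 1 / real N"
    if i: "i \<in> {1..K}" and j: "j \<in> {1..K}" and ij: "i \<noteq> j" for i j
  proof -
    have hh: "h i z * h j z = 1 - G i z - G j z" for z
      using G01[OF ij, of z] by (simp add: h_def algebra_simps)
    have hhint: "integrable Q (\<lambda>z. h i z * h j z)" unfolding hh using Gint[OF i] Gint[OF j] by auto
    have hhE: "(\<integral>z. h i z * h j z \<partial>Q) = -1" unfolding hh using Gint[OF i] Gint[OF j] GE[OF i] GE[OF j]
      by (simp add: Qp.prob_space)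
    have "cov P (\<lambda>\<omega>. Zhat N pit qbar \<omega> i / Z) (\<lambda>\<omega>. Zhat N pit qbar \<omega> j / Z)
       = (\<integral>\<omega>. ((1 / real N) * (\<Sum>n\<in>{1..N}. h i (\<omega> n))) * ((1 / real N) * (\<Sum>m\<in>{1..N}. h j (\<omega> m))) \<partial>P)"
      unfolding cov_def EZ[OF i] EZ[OF j] unfolding Yeq Ym1 ..
    also have "\<dots> = (1 / real N) * (\<integral>z. h i z * h j z \<partial>Q)"
      unfolding PQ by (rule L(2)[OF Q_prob N_pos hint[OF i] hint[OF j] hhint hE[OF i]])
    finally show ?thesis using hhE by simp
  qed
  have partv: "evar P (\<lambda>\<omega>. Zhat N pit qbar \<omega> i / Z) = ennreal (1 / real N) * (Ist i - 1)"
    if i: "i \<in> {1..K}" for i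
  proof -
    have ev: "evar P (\<lambda>\<omega>. Zhat N pit qbar \<omega> i / Z)
       = (\<integral>\<^sup>+\<omega>. ennreal (((1 / real N) * (\<Sum>n\<in>{1..N}. h i (\<omega> n))) * ((1 / real N) * (\<Sum>m\<in>{1..N}. h i (\<omega> m)))) \<partial>P)"
      unfolding evar_def EZ[OF i] unfolding Yeq Ym1 power2_eq_square ..
    show ?thesis
    proof (cases "Ist i = \<top>")
      case False
      define s where "s = enn2real (Ist i)"
      have Is: "Ist i = ennreal s" using False by (simp add: s_def ennreal_enn2real_if)
      have s0: "s \<ge> 0" by (simp add: s_def)
      have G2b: "has_bochner_integral Q (\<lambda>z. (G i z)\<^sup>2) s"
        using Gm[OF i] G2[OF i] Is s0 by (intro has_bochner_integral_nn_integral) auto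
      have G2int: "integrable Q (\<lambda>z. (G i z)\<^sup>2)" and G2E: "(\<integral>z. (G i z)\<^sup>2 \<partial>Q) = s"
        using G2b by (auto simp: has_bochner_integral_iff)
      have hh: "h i z * h i z = (G i z)\<^sup>2 - 2 * G i z + 1" for z
        by (simp add: h_def power2_eq_square algebra_simps)
      have hhint: "integrable Q (\<lambda>z. h i z * h i z)" unfolding hh using G2int Gint[OF i] by auto
      have hhE: "(\<integral>z. h i z * h i z \<partial>Q) = s - 1" unfolding hh using G2int Gint[OF i] GE[OF i] G2E
        by (simp add: Qp.prob_space)
      have Lint: "integrable P (\<lambda>\<omega>. ((1 / real N) * (\<Sum>n\<in>{1..N}. h i (\<omega> n))) * ((1 / real N) * (\<Sum>m\<in>{1..N}. h i (\<omega> m))))"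
        unfolding PQ by (rule L(1)[OF Q_prob N_pos hint[OF i] hint[OF i] hhint hE[OF i]])
      have LE: "(\<integral>\<omega>. ((1 / real N) * (\<Sum>n\<in>{1..N}. h i (\<omega> n))) * ((1 / real N) * (\<Sum>m\<in>{1..N}. h i (\<omega> m))) \<partial>P)
          = (1 / real N) * (s - 1)"
        unfolding PQ hhE[symmetric] by (rule L(2)[OF Q_prob N_pos hint[OF i] hint[OF i] hhint hE[OF i]])
      have "evar P (\<lambda>\<omega>. Zhat N pit qbar \<omega> i / Z) = ennreal ((1 / real N) * (s - 1))"
        unfolding ev LE[symmetric] by (rule nn_integral_eq_integral[OF Lint]) auto
      also have "\<dots> = ennreal (1 / real N) * ennreal (s - 1)" by (rule ennreal_mult') simp
      also have "ennreal (s - 1) = Ist i - 1" unfolding Is using ennreal_minus[of 1 s] by simp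
      finally show ?thesis .
    next
      case True
      let ?W = "\<lambda>\<omega>. ?Y i \<omega> - 1"
      have Wm: "?W \<in> borel_measurable P" using borel_measurable_integrable[OF EYi[OF i]] by simp
      have ev2: "evar P (\<lambda>\<omega>. Zhat N pit qbar \<omega> i / Z) = (\<integral>\<^sup>+\<omega>. ennreal (?W \<omega> * ?W \<omega>) \<partial>P)"
        unfolding ev Ym1 ..
      have pw: "ennreal ((G i (\<omega> 1))\<^sup>2) \<le> ennreal (2 * (real N)\<^sup>2) * (ennreal (?W \<omega> * ?W \<omega>) + 1)"
        if w: "\<omega> \<in> space P" for \<omega>
      proof -
        have sp: "\<omega> n \<in> space Q" if "n \<in> {1..N}" for n
          using w that unfolding PQ by (auto simp: space_PiM)
        have Gn: "G i (\<omega> n) \<ge> 0" if "n \<in> {1..N}" for n using Gnn[OF sp[OF that] i] .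
        have 1: "1 \<in> {1..N}" using N_pos by simp
        have "G i (\<omega> 1) \<le> (\<Sum>n\<in>{1..N}. G i (\<omega> n))"
          by (rule member_le_sum[OF 1]) (use Gn in auto)
        then have le1: "G i (\<omega> 1) \<le> real N * ?Y i \<omega>" using Nr by simp
        have g0: "0 \<le> G i (\<omega> 1)" using Gn[OF 1] .
        have "(G i (\<omega> 1))\<^sup>2 \<le> (real N * ?Y i \<omega>)\<^sup>2"
          using le1 g0 by (intro power_mono) auto
        also have "\<dots> = (real N)\<^sup>2 * (?Y i \<omega>)\<^sup>2" by (rule power_mult_distrib)
        also have "\<dots> \<le> (real N)\<^sup>2 * (2 * (?W \<omega> * ?W \<omega> + 1))"
        proof (rule mult_left_mono)
          have "0 \<le> (?Y i \<omega> - 2)\<^sup>2" by simp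
          then show "(?Y i \<omega>)\<^sup>2 \<le> 2 * (?W \<omega> * ?W \<omega> + 1)"
            by (simp add: power2_eq_square algebra_simps)
        qed simp
        finally have r: "(G i (\<omega> 1))\<^sup>2 \<le> 2 * (real N)\<^sup>2 * (?W \<omega> * ?W \<omega> + 1)" by (simp add: algebra_simps)
        have "ennreal (2 * (real N)\<^sup>2) * (ennreal (?W \<omega> * ?W \<omega>) + 1)
            = ennreal (2 * (real N)\<^sup>2 * (?W \<omega> * ?W \<omega> + 1))"
        proof -
          have w0: "0 \<le> ?W \<omega> * ?W \<omega>" by simp
          have "ennreal (?W \<omega> * ?W \<omega>) + 1 = ennreal (?W \<omega> * ?W \<omega> + 1)"
            using ennreal_plus[OF w0, of 1] by simp
          moreover have "ennreal (2 * (real N)\<^sup>2 * (?W \<omega> * ?W \<omega> + 1))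
              = ennreal (2 * (real N)\<^sup>2) * ennreal (?W \<omega> * ?W \<omega> + 1)"
            by (rule ennreal_mult) (use w0 in simp_all)
          ultimately show ?thesis by simp
        qed
        with r show ?thesis by (simp add: ennreal_leI)
      qed
      have "\<top> = Ist i" using True by simp
      also have "\<dots> = (\<integral>\<^sup>+z. ennreal ((G i z)\<^sup>2) \<partial>Q)" using G2[OF i] by simp
      also have "\<dots> = (\<integral>\<^sup>+\<omega>. ennreal ((G i (\<omega> 1))\<^sup>2) \<partial>P)"
        unfolding PQ using N_pos Gm[OF i]
        by (intro E3[symmetric] Q_prob) auto
      also have "\<dots> \<le> (\<integral>\<^sup>+\<omega>. ennreal (2 * (real N)\<^sup>2) * (ennreal (?W \<omega> * ?W \<omega>) + 1) \<partial>P)"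
        by (rule nn_integral_mono) (rule pw)
      also have "\<dots> = ennreal (2 * (real N)\<^sup>2) * ((\<integral>\<^sup>+\<omega>. ennreal (?W \<omega> * ?W \<omega>) \<partial>P) + 1)"
        using Wm by (simp add: nn_integral_cmult nn_integral_add Pp.emeasure_space_1)
      finally have "ennreal (2 * (real N)\<^sup>2) * ((\<integral>\<^sup>+\<omega>. ennreal (?W \<omega> * ?W \<omega>) \<partial>P) + 1) = \<top>"
        by (simp add: top_unique)
      then have "(\<integral>\<^sup>+\<omega>. ennreal (?W \<omega> * ?W \<omega>) \<partial>P) = \<top>"
        by (simp add: ennreal_mult_eq_top_iff)
      then have lhs: "evar P (\<lambda>\<omega>. Zhat N pit qbar \<omega> i / Z) = \<top>" using ev2 by simp
      have "ennreal (1 / real N) * (Ist i - 1) = \<top>"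
        using True Nr by (simp add: ennreal_mult_top)
      then show ?thesis using lhs by simp
    qed
  qed
  show ?thesis using part1 partv partc unfolding Ist_def by blast
qed

end
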